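(* Let $(\Omega,\mathscr H,\mathbb E)$ be a sub-linear expectation space with $\mathbb E[X]=\sup_{P\in\mathcal P}E_P[X]$ for a family $\mathcal P$ of $\sigma$-additive probability measures, and let $\nu(A)=\inf_{P\in\mathcal P}P(A)$. Let $\{Z_l\}_{l\ge1}$ be random variables in this space and $T_n:=\sum_{l=1}^n Z_l$. Suppose there are positive constants $M_0,M_1$ such that for all $n\ge1$ and all $n_1\le n_2$: (i) $\mathbb E[T_n]\le 0$; (ii) $\mathbb E[T_n^2]\le M_0\, n+(\mathbb E[T_n])^2$ (or, alternatively, $\mathbb E[T_n^2]\le M_0\, n$); (iii) $\sum_{l=n_1}^{n_2}\mathbb E[Z_l^2]\le M_1 (n_2-n_1+1)$. Then $$\nu\Big(\limsup_{n\to\infty}\frac{T_n}{n}\le 0\Big)=1.$$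
   Context: A sub-linear expectation space $(\Omega,\mathscr H,\mathbb E)$ consists of a measurable space $(\Omega,\mathcal F)$, a linear space $\mathscr H$ of real measurable functions on $\Omega$ such that $X_1,\dots,X_n\in\mathscr H$ implies $\varphi(X_1,\dots,X_n)\in\mathscr H$ for every bounded Lipschitz $\varphi:\mathbb R^n\to\mathbb R$, and a functional $\mathbb E:\mathscr H\to\mathbb R$ that is monotone ($X\ge Y\Rightarrow \mathbb E[X]\ge\mathbb E[Y]$), constant preserving ($\mathbb E[c]=c$), sub-additive ($\mathbb E[X+Y]\le\mathbb E[X]+\mathbb E[Y]$) and positively homogeneous ($\mathbb E[\lambda X]=\lambda\mathbb E[X]$ for $\lambda\ge0$). It is assumed that $\mathbb E[X]=\sup_{P\in\mathcal P}E_P[X]$, where $E_P$ is expectation under $P$; this formula is used to evaluate $\mathbb E$ on all random variables appearing (e.g. $Z_l^2$, $T_n^2$). The upper probability is $\mathbb V(A)=\sup_{P\in\mathcal P}P(A)$ and the lower probability is $\nu(A)=\inf_{P\in\mathcal P}P(A)$ for $A\in\mathcal F$. *)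

theory Defs
  imports "HOL-Probability.Probability"
begin

definition upper_exp :: "'a measure set \<Rightarrow> ('a \<Rightarrow> real) \<Rightarrow> ereal" where
  "upper_exp Ps X = (SUP P\<in>Ps. ereal (integral\<^sup>L P X))"

text \<open>Same, for nonnegative random variables (expectation taken as the nonnegative
  Lebesgue integral, so it may be +infinity).\<close>
definition upper_exp_nn :: "'a measure set \<Rightarrow> ('a \<Rightarrow> real) \<Rightarrow> ereal" where
  "upper_exp_nn Ps X = (SUP P\<in>Ps. enn2ereal (\<integral>\<^sup>+ x. ennreal (X x) \<partial>P))"

definition lower_prob :: "'a measure set \<Rightarrow> 'a set \<Rightarrow> real" where
  "lower_prob Ps A = (INF P\<in>Ps. measure P A)"

end

theory Submission imports Defs begin

lemma exists_block: "1 \<le> (n::nat) \<Longrightarrow> \<exists>k. (Suc k)^2 \<le> n \<and> n < (Suc (Suc k))^2"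
proof (induction n)
  case 0 then show ?case by simp
next
  case (Suc n)
  show ?case
  proof (cases "n = 0")
    case True then show ?thesis by (intro exI[of _ 0]) (simp add: power2_eq_square)
  next
    case False
    then obtain k where k: "(Suc k)^2 \<le> n" "n < (Suc (Suc k))^2" using Suc by auto
    show ?thesis
    proof (cases "Suc n < (Suc (Suc k))^2")
      case True then show ?thesis using k by (intro exI[of _ k]) simp
    next
      case False
      then have "Suc n = (Suc (Suc k))^2" using k by simp
      then show ?thesis by (intro exI[of _ "Suc k"]) (simp add: power2_eq_square)
    qed
  qed
qed

lemma det_limsup:
  fixes z :: "nat \<Rightarrow> real" and T :: "nat \<Rightarrow> real"
  assumes T_def: "\<And>n. T n = (\<Sum>l=1..n. z l)"
  and A: "\<And>j. eventually (\<lambda>k. T ((Suc k)^2) \<le> real ((Suc k)^2) / real (Suc j)) sequentially"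
  and B: "\<And>j. eventually (\<lambda>k. (\<Sum>l\<in>{(Suc k)^2<..(Suc (Suc k))^2}. (z l)^2)
              \<le> real (Suc k)^3 / (real (Suc j))^2) sequentially"
  shows "limsup (\<lambda>n. ereal (T n / real n)) \<le> 0"
proof -
  have key: "limsup (\<lambda>n. ereal (T n / real n)) \<le> ereal (3 / real (Suc j))" for j
  proof -
    define e where "e = 1 / real (Suc j)"
    have e_pos: "e > 0" unfolding e_def by simp
    from eventually_conj[OF A[of j] B[of j]] obtain K where K:
      "\<And>k. k \<ge> K \<Longrightarrow> T ((Suc k)^2) \<le> real ((Suc k)^2) / real (Suc j) \<and>
         (\<Sum>l\<in>{(Suc k)^2<..(Suc (Suc k))^2}. (z l)^2) \<le> real (Suc k)^3 / (real (Suc j))^2"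
      unfolding eventually_sequentially by blast
    have "eventually (\<lambda>n. ereal (T n / real n) \<le> ereal (3 / real (Suc j))) sequentially"
      unfolding eventually_sequentially
    proof (intro exI[of _ "(Suc K)^2"] allI impI)
      fix n assume n: "(Suc K)^2 \<le> n"
      then have n1: "1 \<le> n" by (metis One_nat_def Suc_le_eq le_trans zero_less_Suc zero_less_power)
      obtain k where k: "(Suc k)^2 \<le> n" "n < (Suc (Suc k))^2" using exists_block[OF n1] by blast
      have kK: "k \<ge> K"
      proof (rule ccontr)
        assume "\<not> K \<le> k"
        then have "Suc (Suc k) \<le> Suc K" by simp
        then have pp: "(Suc (Suc k))^2 \<le> (Suc K)^2" by (rule power_mono) simp
        show False using pp k n by linarith
      qed
      define a where "a = (Suc k)^2"
      have an: "a \<le> n" using k a_def by simp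
      have "{1..n} = {1..a} \<union> {a<..n}" using an by auto
      then have split: "T n = T a + (\<Sum>l\<in>{a<..n}. z l)"
        unfolding T_def by (simp add: sum.union_disjoint ivl_disj_int)
      define S where "S = (\<Sum>l\<in>{a<..n}. z l)"
      have S2: "S^2 \<le> (\<Sum>l\<in>{a<..n}. (z l)^2) * card {a<..n}"
        unfolding S_def by (rule sum_squared_le_sum_of_squares)
      have "(\<Sum>l\<in>{a<..n}. (z l)^2) \<le> (\<Sum>l\<in>{a<..(Suc (Suc k))^2}. (z l)^2)"
        by (rule sum_mono2) (use k in auto)
      also have "\<dots> \<le> real (Suc k)^3 * e^2" using K[OF kK] by (simp add: e_def a_def power_divide)
      finally have D: "(\<Sum>l\<in>{a<..n}. (z l)^2) \<le> real (Suc k)^3 * e^2" .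
      have "card {a<..n} = n - a" by simp
      also have "n - a \<le> 2 * Suc k" using k unfolding a_def by (simp add: power2_eq_square)
      finally have C: "real (card {a<..n}) \<le> 2 * real (Suc k)" by linarith
      have "S^2 \<le> (real (Suc k)^3 * e^2) * (2 * real (Suc k))"
        using S2 mult_mono[OF D C] by (simp add: sum_nonneg)
      also have "\<dots> \<le> (2 * e * real (Suc k)^2)^2"
      proof -
        have q: "0 \<le> e^2 * real (Suc k)^4" by simp
        have "(real (Suc k)^3 * e^2) * (2 * real (Suc k)) = 2 * (e^2 * real (Suc k)^4)"
          by (simp add: power_numeral_reduce)
        moreover have "(2 * e * real (Suc k)^2)^2 = 4 * (e^2 * real (Suc k)^4)"
          by (simp add: power_mult_distrib flip: power_mult)
        ultimately show ?thesis using q by linarith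
      qed
      finally have "S \<le> 2 * e * real (Suc k)^2"
        by (rule power2_le_imp_le) (use e_pos in simp)
      moreover have "T a \<le> e * real (Suc k)^2" using K[OF kK] by (simp add: a_def e_def)
      ultimately have "T n \<le> 3 * e * real (Suc k)^2" using split S_def by simp
      also have "\<dots> \<le> 3 * e * real n"
      proof -
        have "real ((Suc k)^2) \<le> real n" using k(1) by (rule of_nat_mono)
        then have "real (Suc k)^2 \<le> real n" by simp
        then show ?thesis using e_pos by (intro mult_left_mono) simp_all
      qed
      finally have "T n / real n \<le> 3 * e" using n1 by (simp add: divide_le_eq)
      then show "ereal (T n / real n) \<le> ereal (3 / real (Suc j))" by (simp add: e_def)
    qed
    then show ?thesis by (rule Limsup_bounded)
  qed
  show ?thesis
  proof (rule ccontr)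
    assume "\<not> ?thesis"
    then have "0 < limsup (\<lambda>n. ereal (T n / real n))" by simp
    then obtain r where r: "0 < ereal r" "ereal r < limsup (\<lambda>n. ereal (T n / real n))"
      using ereal_dense2 by blast
    then have r0: "r > 0" by simp
    obtain j :: nat where j: "3 / r < real j" using reals_Archimedean2 by blast
    then have "3 / r < real (Suc j)" by simp
    then have "3 < real (Suc j) * r" using r0 by (simp add: divide_less_eq)
    then have "3 / real (Suc j) < r" by (simp add: divide_less_eq mult.commute)
    moreover have "ereal r < ereal (3 / real (Suc j))" using r(2) key[of j] by (rule less_le_trans)
    ultimately show False by simp
  qed
qed


lemma summable_inv_sq: "summable (\<lambda>k. c / (real (Suc k))^2)"
proof -
  have "summable (\<lambda>k. inverse ((real k)^2))" by (rule inverse_power_summable) simp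
  then have "summable (\<lambda>k. inverse ((real (Suc k))^2))" by (subst summable_Suc_iff)
  then have "summable (\<lambda>k. c * inverse ((real (Suc k))^2))" by (rule summable_mult)
  then show ?thesis by (simp add: divide_inverse)
qed

context prob_space
begin

lemma BC_markov:
  fixes f :: "nat \<Rightarrow> 'a \<Rightarrow> real"
  assumes int: "\<And>k. integrable M (f k)" and nn: "\<And>k x. x \<in> space M \<Longrightarrow> 0 \<le> f k x"
    and bnd: "\<And>k. expectation (f k) \<le> c / (real (Suc k))^2"
  shows "AE x in M. eventually (\<lambda>k. f k x < 1) sequentially"
proof -
  define A where "A k = {x\<in>space M. 1 \<le> f k x}" for k
  have meas[measurable]: "f k \<in> borel_measurable M" for k using int by auto
  have Asets: "A k \<in> sets M" for k unfolding A_def by measurable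
  have mb: "measure M (A k) \<le> c / (real (Suc k))^2" for k
  proof -
    have "measure M (A k) \<le> expectation (f k) / 1"
      unfolding A_def by (rule integral_Markov_inequality_measure[OF int[of k]]) (use nn in auto)
    then show ?thesis using bnd[of k] by simp
  qed
  have "summable (\<lambda>k. measure M (A k))"
    by (rule summable_comparison_test[OF _ summable_inv_sq[of c]]) (use mb in auto)
  from borel_cantelli_AE1[OF Asets _ this]
  have "AE x in M. eventually (\<lambda>k. x \<in> space M - A k) sequentially"
    by (simp add: less_top[symmetric])
  then show ?thesis
    by (rule AE_mp[OF _ AE_I2]) (auto simp: A_def elim!: eventually_mono)
qed

lemma sq_int:
  fixes X :: "'a \<Rightarrow> real"
  assumes [measurable]: "X \<in> borel_measurable M" and sq: "integrable M (\<lambda>x. (X x)^2)"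
  shows "integrable M X" "integrable M (\<lambda>x. (X x - c)^2)"
proof -
  show iX: "integrable M X" by (rule square_integrable_imp_integrable) (use sq in auto)
  have "(\<lambda>x. (X x - c)^2) = (\<lambda>x. (X x)^2 - 2 * c * X x + c^2)"
    by (auto simp: power2_diff algebra_simps)
  then show "integrable M (\<lambda>x. (X x - c)^2)" using iX sq by simp
qed


lemma per_P:
  fixes Z :: "nat \<Rightarrow> 'a \<Rightarrow> real" and T :: "nat \<Rightarrow> 'a \<Rightarrow> real"
  assumes Zm[measurable]: "\<And>l. Z l \<in> borel_measurable M"
    and T_def: "\<And>n x. T n x = (\<Sum>l=1..n. Z l x)"
    and TT: "\<And>n. n \<ge> 1 \<Longrightarrow> integrable M (\<lambda>x. (T n x)^2)"
    and Tm: "\<And>n. n \<ge> 1 \<Longrightarrow> expectation (T n) \<le> 0"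
    and Tv: "\<And>n. n \<ge> 1 \<Longrightarrow> expectation (\<lambda>x. (T n x)^2) \<le> M0 * real n + (expectation (T n))^2"
    and ZZ: "\<And>l. l \<ge> 1 \<Longrightarrow> integrable M (\<lambda>x. (Z l x)^2)"
    and Zs: "\<And>n1 n2. 1 \<le> n1 \<Longrightarrow> n1 \<le> n2 \<Longrightarrow>
        (\<Sum>l=n1..n2. expectation (\<lambda>x. (Z l x)^2)) \<le> M1 * real (n2 - n1 + 1)"
    and M1_pos: "M1 > 0"
  shows "AE x in M. limsup (\<lambda>n. ereal (T n x / real n)) \<le> 0"
proof -
  have Tmeas[measurable]: "T n \<in> borel_measurable M" for n
  proof -
    have "T n = (\<lambda>x. \<Sum>l=1..n. Z l x)" using T_def by auto
    then show ?thesis by simp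
  qed
  define N where "N k = (Suc k)^2" for k :: nat
  have N1: "N k \<ge> 1" for k unfolding N_def by simp
  have A: "AE x in M. eventually (\<lambda>k. T ((Suc k)^2) x \<le> real ((Suc k)^2) / real (Suc j)) sequentially" for j
  proof -
    define m where "m k = expectation (T (N k))" for k
    define a where "a k = real (Suc j) / real (N k)" for k
    define f where "f k x = (a k)^2 * (T (N k) x - m k)^2" for k x
    have apos: "a k > 0" for k using N1[of k] unfolding a_def by simp
    have intT: "integrable M (T (N k))" for k using sq_int(1)[OF Tmeas TT[OF N1]] .
    have intC: "integrable M (\<lambda>x. (T (N k) x - m k)^2)" for k using sq_int(2)[OF Tmeas TT[OF N1]] .
    have "AE x in M. eventually (\<lambda>k. f k x < 1) sequentially"
    proof (rule BC_markov)
      show "integrable M (f k)" for k unfolding f_def using intC by simp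
      show "0 \<le> f k x" for k x unfolding f_def by simp
      show "expectation (f k) \<le> (M0 * (real (Suc j))^2) / (real (Suc k))^2" for k
      proof -
        have "expectation (f k) = (a k)^2 * variance (T (N k))"
          unfolding f_def m_def by simp
        also have "variance (T (N k)) = expectation (\<lambda>x. (T (N k) x)^2) - (m k)^2"
          unfolding m_def by (rule variance_eq[OF intT TT[OF N1]])
        also have "\<dots> \<le> M0 * real (N k)" using Tv[OF N1[of k]] unfolding m_def by simp
        finally have "expectation (f k) \<le> (a k)^2 * (M0 * real (N k))"
          by (simp add: mult_left_mono)
        also have "\<dots> = (M0 * (real (Suc j))^2) / real (N k)"
        proof -
          have "real (N k) \<noteq> 0" using N1[of k] by simp
          then show ?thesis unfolding a_def by (simp add: power2_eq_square field_simps)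
        qed
        also have "real (N k) = (real (Suc k))^2" unfolding N_def by simp
        finally show ?thesis .
      qed
    qed
    then show ?thesis
    proof (rule AE_mp[OF _ AE_I2], intro impI, elim eventually_mono)
      fix x k assume "f k x < 1"
      then have "(a k * (T (N k) x - m k))^2 < 1^2" unfolding f_def by (simp add: power_mult_distrib)
      then have "a k * (T (N k) x - m k) < 1" by (rule power2_less_imp_less) simp
      then have "T (N k) x - m k < 1 / a k" using apos[of k] by (simp add: field_simps)
      moreover have "m k \<le> 0" unfolding m_def using Tm[OF N1] .
      moreover have "1 / a k = real ((Suc k)^2) / real (Suc j)" unfolding a_def N_def by simp
      ultimately show "T ((Suc k)^2) x \<le> real ((Suc k)^2) / real (Suc j)" unfolding N_def by simp
    qed
  qed
  have B: "AE x in M. eventually (\<lambda>k. (\<Sum>l\<in>{(Suc k)^2<..(Suc (Suc k))^2}. (Z l x)^2)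
              \<le> real (Suc k)^3 / (real (Suc j))^2) sequentially" for j
  proof -
    define D where "D k x = (\<Sum>l\<in>{N k<..N (Suc k)}. (Z l x)^2)" for k x
    define b where "b k = (real (Suc j))^2 / real (Suc k)^3" for k
    define f where "f k x = b k * D k x" for k x
    have bpos: "b k > 0" for k unfolding b_def by simp
    have intD: "integrable M (D k)" for k
      unfolding D_def by (rule Bochner_Integration.integrable_sum[where f="\<lambda>l x. (Z l x)^2"]) (rule ZZ, simp)
    have ED: "expectation (D k) \<le> M1 * (2 * real (Suc k) + 1)" for k
    proof -
      have "expectation (D k) = (\<Sum>l\<in>{N k<..N (Suc k)}. expectation (\<lambda>x. (Z l x)^2))"
        unfolding D_def by (rule Bochner_Integration.integral_sum[where f="\<lambda>l x. (Z l x)^2"]) (rule ZZ, simp)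
      also have "{N k<..N (Suc k)} = {Suc (N k)..N (Suc k)}" by auto
      also have "(\<Sum>l\<in>{Suc (N k)..N (Suc k)}. expectation (\<lambda>x. (Z l x)^2)) \<le> M1 * real (N (Suc k) - Suc (N k) + 1)"
        by (rule Zs) (simp_all add: N_def power2_eq_square)
      also have "real (N (Suc k) - Suc (N k) + 1) = 2 * real (Suc k) + 1"
        unfolding N_def by (simp add: power2_eq_square)
      finally show ?thesis .
    qed
    have "AE x in M. eventually (\<lambda>k. f k x < 1) sequentially"
    proof (rule BC_markov)
      show "integrable M (f k)" for k unfolding f_def using intD by simp
      show "0 \<le> f k x" for k x unfolding f_def D_def using bpos[of k] by (simp add: sum_nonneg)
      show "expectation (f k) \<le> (3 * M1 * (real (Suc j))^2) / (real (Suc k))^2" for k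
      proof -
        have "expectation (f k) = b k * expectation (D k)" unfolding f_def by simp
        also have "\<dots> \<le> b k * (M1 * (2 * real (Suc k) + 1))"
          using ED[of k] bpos[of k] by (simp add: mult_left_mono)
        also have "\<dots> \<le> b k * (M1 * (3 * real (Suc k)))"
          using bpos[of k] M1_pos by (intro mult_left_mono) simp_all
        also have "\<dots> = (3 * M1 * (real (Suc j))^2) / (real (Suc k))^2"
        proof -
          have gen: "s / r^3 * (M * (3 * r)) = (3 * M * s) / r^2" if "r \<noteq> 0" for r s M :: real
            using that by (simp add: power2_eq_square power3_eq_cube field_simps)
          show ?thesis unfolding b_def by (rule gen) simp
        qed
        finally show ?thesis .
      qed
    qed
    then show ?thesis
    proof (rule AE_mp[OF _ AE_I2], intro impI, elim eventually_mono)
      fix x k assume "f k x < 1"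
      then have "D k x < 1 / b k" using bpos[of k] unfolding f_def by (simp add: field_simps)
      then show "(\<Sum>l\<in>{(Suc k)^2<..(Suc (Suc k))^2}. (Z l x)^2) \<le> real (Suc k)^3 / (real (Suc j))^2"
        unfolding D_def b_def N_def by simp
    qed
  qed
  have "AE x in M. \<forall>j. eventually (\<lambda>k. T ((Suc k)^2) x \<le> real ((Suc k)^2) / real (Suc j)) sequentially"
    using A by (subst AE_all_countable) simp
  moreover have "AE x in M. \<forall>j. eventually (\<lambda>k. (\<Sum>l\<in>{(Suc k)^2<..(Suc (Suc k))^2}. (Z l x)^2)
              \<le> real (Suc k)^3 / (real (Suc j))^2) sequentially"
    using B by (subst AE_all_countable) simp
  ultimately show ?thesis
  proof (rule AE_mp[OF _ AE_mp[OF _ AE_I2]], intro impI)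
    fix x
    assume a1: "\<forall>j. eventually (\<lambda>k. (\<Sum>l\<in>{(Suc k)^2<..(Suc (Suc k))^2}. (Z l x)^2)
              \<le> real (Suc k)^3 / (real (Suc j))^2) sequentially"
      and a2: "\<forall>j. eventually (\<lambda>k. T ((Suc k)^2) x \<le> real ((Suc k)^2) / real (Suc j)) sequentially"
    show "limsup (\<lambda>n. ereal (T n x / real n)) \<le> 0"
      by (rule det_limsup[of "\<lambda>n. T n x" "\<lambda>l. Z l x"]) (use T_def a1 a2 in auto)
  qed
qed

end


lemma nn_bound:
  fixes f :: "'a \<Rightarrow> real"
  assumes [measurable]: "f \<in> borel_measurable P" and nn: "\<And>x. 0 \<le> f x"
    and le: "enn2ereal (\<integral>\<^sup>+ x. ennreal (f x) \<partial>P) \<le> ereal c"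
  shows "integrable P f" "integral\<^sup>L P f \<le> c"
proof -
  have "(\<integral>\<^sup>+ x. ennreal (f x) \<partial>P) \<noteq> top"
  proof
    assume "(\<integral>\<^sup>+ x. ennreal (f x) \<partial>P) = top"
    then show False using le by simp
  qed
  then have fin: "(\<integral>\<^sup>+ x. ennreal (norm (f x)) \<partial>P) < \<infinity>" using nn by (simp add: less_top)
  show int: "integrable P f" by (rule integrableI_bounded) (use fin in auto)
  have "(\<integral>\<^sup>+ x. ennreal (f x) \<partial>P) = ennreal (integral\<^sup>L P f)"
    by (rule nn_integral_eq_integral[OF int]) (use nn in auto)
  then show "integral\<^sup>L P f \<le> c" using le nn
    by (simp add: integral_nonneg enn2ereal_ennreal)
qed

theorem theorem3p1:
  fixes M :: "'a measure" and Ps :: "'a measure set"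
    and Z :: "nat \<Rightarrow> 'a \<Rightarrow> real" and T :: "nat \<Rightarrow> 'a \<Rightarrow> real"
    and M0 M1 :: real
  assumes Ps_ne: "Ps \<noteq> {}"
    and Ps_prob: "\<And>P. P \<in> Ps \<Longrightarrow> prob_space P \<and> sets P = sets M"
    and Z_meas: "\<And>l. Z l \<in> borel_measurable M"
    and T_def: "\<And>n x. T n x = (\<Sum>l=1..n. Z l x)"
    and M0_pos: "M0 > 0" and M1_pos: "M1 > 0"
    and cond_i: "\<And>n. n \<ge> 1 \<Longrightarrow> upper_exp Ps (T n) \<le> 0"
    and cond_ii: "\<And>n. n \<ge> 1 \<Longrightarrow>
        upper_exp_nn Ps (\<lambda>x. (T n x)^2) \<le> ereal (M0 * real n) + (upper_exp Ps (T n))^2"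
    and cond_iii: "\<And>n1 n2. 1 \<le> n1 \<Longrightarrow> n1 \<le> n2 \<Longrightarrow>
        (\<Sum>l=n1..n2. upper_exp_nn Ps (\<lambda>x. (Z l x)^2)) \<le> ereal (M1 * real (n2 - n1 + 1))"
  shows "lower_prob Ps {x \<in> space M. limsup (\<lambda>n. ereal (T n x / real n)) \<le> 0} = 1"
proof -
  define S where "S = {x \<in> space M. limsup (\<lambda>n. ereal (T n x / real n)) \<le> 0}"
  have TmM[measurable]: "T n \<in> borel_measurable M" for n
  proof -
    have "T n = (\<lambda>x. \<Sum>l=1..n. Z l x)" using T_def by auto
    then show ?thesis using Z_meas by simp
  qed
  have SM: "S \<in> sets M" unfolding S_def by measurable
  have one: "measure P S = 1" if P: "P \<in> Ps" for P
  proof -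
    interpret prob_space P using Ps_prob[OF P] by simp
    have sP: "sets P = sets M" using Ps_prob[OF P] by simp
    have spP: "space P = space M" using sets_eq_imp_space_eq[OF sP] .
    have ZmP[measurable]: "Z l \<in> borel_measurable P" for l
      by (subst measurable_cong_sets[OF sP refl]) (rule Z_meas)
    have TmP[measurable]: "T n \<in> borel_measurable P" for n
      by (subst measurable_cong_sets[OF sP refl]) (rule TmM)
    have ue: "ereal (expectation X) \<le> upper_exp Ps X" for X
      unfolding upper_exp_def using P by (rule SUP_upper)
    have une: "enn2ereal (\<integral>\<^sup>+ x. ennreal (X x) \<partial>P) \<le> upper_exp_nn Ps X" for X
      unfolding upper_exp_nn_def using P by (rule SUP_upper)
    have Tfacts: "integrable P (\<lambda>x. (T n x)^2) \<and> expectation (T n) \<le> 0 \<and>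
        expectation (\<lambda>x. (T n x)^2) \<le> M0 * real n + (expectation (T n))^2" if n: "n \<ge> 1" for n
    proof -
      have u1: "ereal (expectation (T n)) \<le> upper_exp Ps (T n)" by (rule ue)
      have u2: "upper_exp Ps (T n) \<le> 0" by (rule cond_i[OF n])
      obtain r where r: "upper_exp Ps (T n) = ereal r"
        using u1 u2 by (cases "upper_exp Ps (T n)") auto
      have r0: "r \<le> 0" and er: "expectation (T n) \<le> r" using u1 u2 r by auto
      have "enn2ereal (\<integral>\<^sup>+ x. ennreal ((T n x)^2) \<partial>P) \<le> ereal (M0 * real n + r^2)"
        using order.trans[OF une cond_ii[OF n]] r by (simp add: power2_eq_square)
      from nn_bound[OF _ _ this] have i: "integrable P (\<lambda>x. (T n x)^2)"
        and b: "expectation (\<lambda>x. (T n x)^2) \<le> M0 * real n + r^2" by auto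
      have "r^2 \<le> (expectation (T n))^2" using mult_mono[of "-r" "-expectation (T n)" "-r" "-expectation (T n)"] r0 er
        by (simp add: power2_eq_square)
      then show ?thesis using i b er r0 by auto
    qed
    have Zfacts: "integrable P (\<lambda>x. (Z l x)^2)" if l: "l \<ge> 1" for l
    proof -
      have "enn2ereal (\<integral>\<^sup>+ x. ennreal ((Z l x)^2) \<partial>P) \<le> ereal M1"
      proof -
        have "upper_exp_nn Ps (\<lambda>x. (Z l x)^2) \<le> ereal M1"
          using cond_iii[OF l order.refl] by simp
        then show ?thesis using order.trans[OF une] by blast
      qed
      from nn_bound[OF _ _ this] show ?thesis by auto
    qed
    have Zint_eq: "ereal (expectation (\<lambda>x. (Z l x)^2)) \<le> upper_exp_nn Ps (\<lambda>x. (Z l x)^2)"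
      if l: "l \<ge> 1" for l
    proof -
      have "(\<integral>\<^sup>+ x. ennreal ((Z l x)^2) \<partial>P) = ennreal (expectation (\<lambda>x. (Z l x)^2))"
        by (rule nn_integral_eq_integral[OF Zfacts[OF l]]) auto
      then show ?thesis using une[of "\<lambda>x. (Z l x)^2"]
        by (simp add: integral_nonneg enn2ereal_ennreal)
    qed
    have Zs: "(\<Sum>l=n1..n2. expectation (\<lambda>x. (Z l x)^2)) \<le> M1 * real (n2 - n1 + 1)"
      if "1 \<le> n1" "n1 \<le> n2" for n1 n2
    proof -
      have "ereal (\<Sum>l=n1..n2. expectation (\<lambda>x. (Z l x)^2)) = (\<Sum>l=n1..n2. ereal (expectation (\<lambda>x. (Z l x)^2)))"
        by (simp add: sum_ereal)
      also have "\<dots> \<le> (\<Sum>l=n1..n2. upper_exp_nn Ps (\<lambda>x. (Z l x)^2))"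
        by (rule sum_mono) (rule Zint_eq, use that in auto)
      also have "\<dots> \<le> ereal (M1 * real (n2 - n1 + 1))" by (rule cond_iii[OF that])
      finally show ?thesis by simp
    qed
    have "AE x in P. limsup (\<lambda>n. ereal (T n x / real n)) \<le> 0"
      by (rule per_P[OF ZmP T_def _ _ _ Zfacts Zs M1_pos]) (use Tfacts in auto)
    moreover have "S = {x \<in> space P. limsup (\<lambda>n. ereal (T n x / real n)) \<le> 0}"
      unfolding S_def spP ..
    moreover have "S \<in> events" using SM sP by simp
    ultimately show ?thesis by (simp add: prob_Collect_eq_1)
  qed
  have "lower_prob Ps S = (INF P\<in>Ps. 1)"
    unfolding lower_prob_def by (rule INF_cong) (simp_all add: one)
  also have "\<dots> = 1" using Ps_ne by simp
  finally show ?thesis unfolding S_def .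
qed

end
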